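(* Let $\mathbf T$ be a countably infinite homogeneous tournament and $\mathbf T^*$ an expansion of $\mathbf T$ as in the context such that $\mathrm{Age}(\mathbf T^* )$ has the Ramsey property. Then $\mathrm{Age}(\mathbf T[I_\omega]^* )$ has the Ramsey property.
   Context: For relational structures $\mathbf A,\mathbf B$ in the same language, $\binom{\mathbf B}{\mathbf A}$ denotes the set of substructures of $\mathbf B$ isomorphic to $\mathbf A$. For $k\ge 1$, $\mathbf C\to(\mathbf B)^{\mathbf A}_k$ means: for every map $c:\binom{\mathbf C}{\mathbf A}\to[k]=\{0,\dots,k-1\}$ there is $\mathbf B'\in\binom{\mathbf C}{\mathbf B}$ such that $c$ is constant on $\binom{\mathbf B'}{\mathbf A}$. A class $\mathcal K$ of finite structures has the Ramsey property if for all $k\ge1$ and all $\mathbf A,\mathbf B\in\mathcal K$ there is $\mathbf C\in\mathcal K$ with $\mathbf C\to(\mathbf B)^{\mathbf A}_k$. The age $\mathrm{Age}(\mathbf F)$ of a structure $\mathbf F$ is the class of finite structures embeddable in $\mathbf F$. A tournament is a directed graph in which every pair of distinct vertices carries exactly one directed edge; it is homogeneous if every isomorphism between finite substructures extends to an automorphism. $\mathbf T=(T,E^{\mathbf T})$ is a countable homogeneous tournament, and $\mathbf T^*$ is an expansion of $\mathbf T$ to a countable relational language $L_{\mathbf T^*}\supseteq\{E,<\}$ in which $<$ is interpreted as a linear order $<^*$ on $T$. Fix a linear order $\prec$ on $\mathbb N$ with $(\mathbb N,\prec)\cong(\mathbb Q,<)$. The structure $\mathbf T[I_\omega]^*$ has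 universe $T\times\mathbb N$ and language $L_{\mathbf T^*}$, interpreted as: $E((x,i),(y,j))$ iff $E^{\mathbf T}(x,y)$; for each $m$-ary $R\in L_{\mathbf T^*}\setminus\{E,<\}$, $R((x_1,i_1),\dots,(x_m,i_m))$ iff $R^{\mathbf T^*}(x_1,\dots,x_m)$; $(x,i)<(y,j)$ iff $x<^*y$, or $x=y$ and $i\prec j$. *)

theory Defs
  imports Complex_Main "HOL-Library.Countable_Set"
begin

text \<open>A relational structure in a language whose symbols are the elements of type 'l
  (with arity function ar): a universe together with, for each symbol R, the set of
  tuples (lists of length ar R) on which R holds.\<close>
type_synonym ('l, 'a) str = "'a set \<times> ('l \<Rightarrow> 'a list set)"

definition wf_str :: "('l \<Rightarrow> nat) \<Rightarrow> ('l, 'a) str \<Rightarrow> bool" where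
  "wf_str ar A \<longleftrightarrow> (\<forall>R. \<forall>t \<in> snd A R. length t = ar R \<and> set t \<subseteq> fst A)"

definition induced :: "('l, 'a) str \<Rightarrow> 'a set \<Rightarrow> ('l, 'a) str" where
  "induced A S = (S, \<lambda>R. {t \<in> snd A R. set t \<subseteq> S})"

definition is_embedding ::
  "('l \<Rightarrow> nat) \<Rightarrow> ('a \<Rightarrow> 'b) \<Rightarrow> ('l, 'a) str \<Rightarrow> ('l, 'b) str \<Rightarrow> bool" where
  "is_embedding ar f A B \<longleftrightarrow> inj_on f (fst A) \<and> f ` fst A \<subseteq> fst B \<and>
     (\<forall>R t. length t = ar R \<and> set t \<subseteq> fst A \<longrightarrow> (t \<in> snd A R \<longleftrightarrow> map f t \<in> snd B R))"

definition isomorphic :: "('l \<Rightarrow> nat) \<Rightarrow> ('l, 'a) str \<Rightarrow> ('l, 'b) str \<Rightarrow> bool" where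
  "isomorphic ar A B \<longleftrightarrow> (\<exists>f. is_embedding ar f A B \<and> f ` fst A = fst B)"

text \<open>binom C A: substructures of C isomorphic to A (a substructure is identified with its
  universe, the relations being induced).\<close>
definition copies :: "('l \<Rightarrow> nat) \<Rightarrow> ('l, 'a) str \<Rightarrow> ('l, 'b) str \<Rightarrow> 'a set set" where
  "copies ar C A = {S. S \<subseteq> fst C \<and> isomorphic ar A (induced C S)}"

definition arrows ::
  "('l \<Rightarrow> nat) \<Rightarrow> ('l, 'a) str \<Rightarrow> ('l, 'b) str \<Rightarrow> ('l, 'c) str \<Rightarrow> nat \<Rightarrow> bool" where
  "arrows ar C B A k \<longleftrightarrow>
     (\<forall>c :: 'a set \<Rightarrow> nat. (\<forall>S \<in> copies ar C A. c S < k) \<longrightarrow>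
        (\<exists>B' \<in> copies ar C B. \<exists>i. \<forall>S \<in> copies ar (induced C B') A. c S = i))"

text \<open>Classes of finite structures are represented by structures carried by subsets of nat
  (every finite structure has an isomorphic copy of this form).\<close>
definition ramsey_class :: "('l \<Rightarrow> nat) \<Rightarrow> ('l, nat) str set \<Rightarrow> bool" where
  "ramsey_class ar K \<longleftrightarrow>
     (\<forall>k\<ge>1. \<forall>A\<in>K. \<forall>B\<in>K. \<exists>C\<in>K. arrows ar C B A k)"

definition age :: "('l \<Rightarrow> nat) \<Rightarrow> ('l, 'a) str \<Rightarrow> ('l, nat) str set" where
  "age ar F = {A. wf_str ar A \<and> finite (fst A) \<and> (\<exists>f. is_embedding ar f A F)}"

definition tournament :: "'a set \<Rightarrow> ('a \<Rightarrow> 'a \<Rightarrow> bool) \<Rightarrow> bool" where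
  "tournament T E \<longleftrightarrow> (\<forall>x\<in>T. \<forall>y\<in>T. x \<noteq> y \<longrightarrow> (E x y \<longleftrightarrow> \<not> E y x)) \<and> (\<forall>x\<in>T. \<not> E x x)"

definition homogeneous_digraph :: "'a set \<Rightarrow> ('a \<Rightarrow> 'a \<Rightarrow> bool) \<Rightarrow> bool" where
  "homogeneous_digraph T E \<longleftrightarrow>
     (\<forall>S f. S \<subseteq> T \<and> finite S \<and> inj_on f S \<and> f ` S \<subseteq> T \<and>
        (\<forall>x\<in>S. \<forall>y\<in>S. E x y \<longleftrightarrow> E (f x) (f y)) \<longrightarrow>
        (\<exists>g. bij_betw g T T \<and> (\<forall>x\<in>T. \<forall>y\<in>T. E x y \<longleftrightarrow> E (g x) (g y)) \<and>
             (\<forall>x\<in>S. g x = f x)))"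

definition strict_linear_order_on :: "'a set \<Rightarrow> ('a \<Rightarrow> 'a \<Rightarrow> bool) \<Rightarrow> bool" where
  "strict_linear_order_on T lt \<longleftrightarrow>
     (\<forall>x\<in>T. \<not> lt x x) \<and>
     (\<forall>x\<in>T. \<forall>y\<in>T. \<forall>z\<in>T. lt x y \<and> lt y z \<longrightarrow> lt x z) \<and>
     (\<forall>x\<in>T. \<forall>y\<in>T. x \<noteq> y \<longrightarrow> lt x y \<or> lt y x)"

definition blowup ::
  "'l \<Rightarrow> 'l \<Rightarrow> (nat \<Rightarrow> nat \<Rightarrow> bool) \<Rightarrow> ('l, 'a) str \<Rightarrow> ('l, 'a \<times> nat) str" where
  "blowup Esym Ltsym prec Ts =
     (fst Ts \<times> UNIV,
      \<lambda>R. if R = Esym then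
            {[(x,i),(y,j)] | x i y j. x \<in> fst Ts \<and> y \<in> fst Ts \<and> [x,y] \<in> snd Ts Esym}
          else if R = Ltsym then
            {[(x,i),(y,j)] | x i y j. x \<in> fst Ts \<and> y \<in> fst Ts \<and>
               ([x,y] \<in> snd Ts Ltsym \<or> (x = y \<and> prec i j))}
          else {t. set t \<subseteq> fst Ts \<times> UNIV \<and> map fst t \<in> snd Ts R})"

end

theory Submission
  imports Defs "HOL-Library.Ramsey"
begin



lemma induced_induced: "S \<subseteq> W \<Longrightarrow> induced (induced C W) S = induced C S"
  unfolding induced_def by auto

lemma fst_induced[simp]: "fst (induced C S) = S"
  unfolding induced_def by simp

lemma snd_induced: "snd (induced C S) R = {t \<in> snd C R. set t \<subseteq> S}"
  unfolding induced_def by simp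

lemma emb_comp:
  assumes "is_embedding ar f A B" "is_embedding ar g B C"
  shows "is_embedding ar (g \<circ> f) A C"
proof -
  have "inj_on (g \<circ> f) (fst A)"
    using assms unfolding is_embedding_def by (meson comp_inj_on inj_on_subset)
  moreover have "(g \<circ> f) ` fst A \<subseteq> fst C" using assms unfolding is_embedding_def by (auto simp: image_subset_iff)
  moreover have "\<forall>R t. length t = ar R \<and> set t \<subseteq> fst A \<longrightarrow> (t \<in> snd A R \<longleftrightarrow> map (g \<circ> f) t \<in> snd C R)"
  proof (intro allI impI)
    fix R t assume h: "length t = ar R \<and> set t \<subseteq> fst A"
    have 1: "t \<in> snd A R \<longleftrightarrow> map f t \<in> snd B R" using assms(1) h unfolding is_embedding_def by blast
    have "length (map f t) = ar R \<and> set (map f t) \<subseteq> fst B" using assms(1) h unfolding is_embedding_def by auto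
    hence "map f t \<in> snd B R \<longleftrightarrow> map g (map f t) \<in> snd C R" using assms(2) unfolding is_embedding_def by blast
    thus "t \<in> snd A R \<longleftrightarrow> map (g \<circ> f) t \<in> snd C R" using 1 by simp
  qed
  ultimately show ?thesis unfolding is_embedding_def by blast
qed

lemma iso_trans: "isomorphic ar A B \<Longrightarrow> isomorphic ar B C \<Longrightarrow> isomorphic ar A C"
  unfolding isomorphic_def
  by (metis emb_comp image_comp)

lemma emb_inv:
  assumes "is_embedding ar f A B" "f ` fst A = fst B"
  shows "is_embedding ar (the_inv_into (fst A) f) B A" "the_inv_into (fst A) f ` fst B = fst A"
proof -
  let ?g = "the_inv_into (fst A) f"
  have inj: "inj_on f (fst A)" using assms unfolding is_embedding_def by blast
  have g1: "\<And>y. y \<in> fst B \<Longrightarrow> ?g y \<in> fst A \<and> f (?g y) = y"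
  proof -
    fix y assume "y \<in> fst B"
    hence y: "y \<in> f ` fst A" using assms(2) by simp
    show "?g y \<in> fst A \<and> f (?g y) = y"
      using the_inv_into_into[OF inj y subset_refl] f_the_inv_into_f[OF inj y] by simp
  qed
  show im: "?g ` fst B = fst A" unfolding assms(2)[symmetric] using the_inv_into_onto[OF inj] .
  have "inj_on ?g (fst B)" unfolding assms(2)[symmetric] using inj_on_the_inv_into[OF inj] .
  moreover have "\<forall>R t. length t = ar R \<and> set t \<subseteq> fst B \<longrightarrow> (t \<in> snd B R \<longleftrightarrow> map ?g t \<in> snd A R)"
  proof (intro allI impI)
    fix R t assume h: "length t = ar R \<and> set t \<subseteq> fst B"
    have m: "map f (map ?g t) = t" unfolding map_map by (rule map_idI) (use h g1 in auto)
    have "length (map ?g t) = ar R \<and> set (map ?g t) \<subseteq> fst A" using h g1 by auto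
    hence "map ?g t \<in> snd A R \<longleftrightarrow> map f (map ?g t) \<in> snd B R" using assms(1) unfolding is_embedding_def by blast
    thus "t \<in> snd B R \<longleftrightarrow> map ?g t \<in> snd A R" using m by simp
  qed
  ultimately show "is_embedding ar ?g B A" using im unfolding is_embedding_def by blast
qed

lemma iso_sym: "isomorphic ar A B \<Longrightarrow> isomorphic ar B A"
proof -
  assume "isomorphic ar A B"
  then obtain f where f: "is_embedding ar f A B" "f ` fst A = fst B" unfolding isomorphic_def by blast
  show ?thesis unfolding isomorphic_def using emb_inv[OF f] by blast
qed

lemma emb_restrict:
  assumes "is_embedding ar f A B" "S \<subseteq> fst A"
  shows "is_embedding ar f (induced A S) (induced B (f ` S))"
proof -
  have inj: "inj_on f (fst A)" using assms unfolding is_embedding_def by blast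
  have "\<forall>R t. length t = ar R \<and> set t \<subseteq> S \<longrightarrow> (t \<in> snd A R \<and> set t \<subseteq> S \<longleftrightarrow> map f t \<in> snd B R \<and> set (map f t) \<subseteq> f ` S)"
    using assms unfolding is_embedding_def by auto
  thus ?thesis using assms inj unfolding is_embedding_def induced_def
    by (auto intro: inj_on_subset)
qed

lemma iso_restrict:
  assumes "is_embedding ar f A B" "S \<subseteq> fst A"
  shows "isomorphic ar (induced A S) (induced B (f ` S))"
  using emb_restrict[OF assms] unfolding isomorphic_def by auto

lemma emb_into_induced:
  assumes "is_embedding ar f A B" "f ` fst A \<subseteq> S"
  shows "is_embedding ar f A (induced B S)"
  using assms unfolding is_embedding_def induced_def by (auto simp: image_subset_iff subset_iff)

lemma emb_from_induced:
  assumes "is_embedding ar f A (induced B S)" "S \<subseteq> fst B"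
  shows "is_embedding ar f A B"
  using assms unfolding is_embedding_def induced_def by (auto simp: image_subset_iff subset_iff)

lemma emb_iso_image:
  assumes "is_embedding ar f A B"
  shows "isomorphic ar A (induced B (f ` fst A))"
  using emb_into_induced[OF assms] unfolding isomorphic_def by auto

lemma induced_self: "wf_str ar C \<Longrightarrow> induced C (fst C) = C"
  unfolding induced_def wf_str_def by (cases C) auto

lemma finite_rep:
  assumes "wf_str ar F" "finite S" "S \<subseteq> fst F"
  shows "\<exists>D \<in> age ar F. isomorphic ar D (induced F S)"
proof -
  obtain g where g: "bij_betw g {0..<card S} S" using ex_bij_betw_nat_finite assms(2) by blast
  define D where "D = ({0..<card S}, \<lambda>R. {t. length t = ar R \<and> set t \<subseteq> {0..<card S} \<and> map g t \<in> snd F R})"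
  have wfD: "wf_str ar D" unfolding D_def wf_str_def by auto
  have ginj: "inj_on g {0..<card S}" and gim: "g ` {0..<card S} = S" using g unfolding bij_betw_def by auto
  have rel: "\<forall>R t. length t = ar R \<and> set t \<subseteq> fst D \<longrightarrow> (t \<in> snd D R \<longleftrightarrow> map g t \<in> snd (induced F S) R)"
  proof (intro allI impI)
    fix R t assume h: "length t = ar R \<and> set t \<subseteq> fst D"
    have "set (map g t) \<subseteq> S" using h gim unfolding D_def by auto
    thus "t \<in> snd D R \<longleftrightarrow> map g t \<in> snd (induced F S) R" using h unfolding D_def snd_induced by simp
  qed
  have emb: "is_embedding ar g D (induced F S)"
    unfolding is_embedding_def using ginj gim rel unfolding D_def by simp
  have "g ` fst D = S" using gim unfolding D_def by simp
  hence iso: "isomorphic ar D (induced F S)" using emb unfolding isomorphic_def by auto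
  have "is_embedding ar g D F" using emb_from_induced[OF emb assms(3)] .
  hence "D \<in> age ar F" using wfD unfolding age_def D_def by auto
  thus ?thesis using iso by blast
qed

lemma iso_card:
  assumes "isomorphic ar A B" shows "card (fst A) = card (fst B)"
proof -
  obtain f where f: "is_embedding ar f A B" "f ` fst A = fst B" using assms unfolding isomorphic_def by blast
  have "inj_on f (fst A)" using f(1) unfolding is_embedding_def by blast
  thus ?thesis using card_image f(2) by metis
qed

lemma copies_induced:
  assumes "W \<subseteq> fst C"
  shows "copies ar (induced C W) A = {S. S \<subseteq> W \<and> isomorphic ar A (induced C S)}"
  unfolding copies_def by (auto simp: induced_induced)

lemma copies_iso_left:
  assumes "isomorphic ar A A'"
  shows "copies ar C A = copies ar C A'"
  unfolding copies_def
proof (rule Collect_cong)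
  fix S
  show "(S \<subseteq> fst C \<and> isomorphic ar A (induced C S)) = (S \<subseteq> fst C \<and> isomorphic ar A' (induced C S))"
    using assms iso_trans iso_sym by metis
qed

lemma copies_transfer:
  assumes emb: "is_embedding ar h C0 C1" and onto: "h ` fst C0 = fst C1"
    and "S \<in> copies ar C0 X"
  shows "h ` S \<in> copies ar C1 X"
proof -
  have S: "S \<subseteq> fst C0" "isomorphic ar X (induced C0 S)" using assms(3) unfolding copies_def by auto
  have "isomorphic ar (induced C0 S) (induced C1 (h ` S))" using iso_restrict[OF emb S(1)] .
  thus "h ` S \<in> copies ar C1 X" using S onto iso_trans unfolding copies_def by blast
qed

lemma arrows_transfer:
  assumes emb: "is_embedding ar h C0 C1" and onto: "h ` fst C0 = fst C1"
    and arr: "arrows ar C0 B A k"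
  shows "arrows ar C1 B A k"
  unfolding arrows_def
proof (intro allI impI)
  fix c1 :: "'c set \<Rightarrow> nat"
  assume col: "\<forall>S\<in>copies ar C1 A. c1 S < k"
  define c0 where "c0 S = c1 (h ` S)" for S
  have inj: "inj_on h (fst C0)" using emb unfolding is_embedding_def by blast
  have "\<forall>S\<in>copies ar C0 A. c0 S < k"
  proof
    fix S assume "S \<in> copies ar C0 A"
    hence "h ` S \<in> copies ar C1 A" by (rule copies_transfer[OF emb onto])
    thus "c0 S < k" using col unfolding c0_def by blast
  qed
  hence "\<exists>B'\<in>copies ar C0 B. \<exists>i. \<forall>S\<in>copies ar (induced C0 B') A. c0 S = i"
    using arr unfolding arrows_def by blast
  then obtain B0 i where B0: "B0 \<in> copies ar C0 B" and hom: "\<forall>S\<in>copies ar (induced C0 B0) A. c0 S = i"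
    by blast
  have B0sub: "B0 \<subseteq> fst C0" using B0 unfolding copies_def by auto
  show "\<exists>B'\<in>copies ar C1 B. \<exists>i. \<forall>S\<in>copies ar (induced C1 B') A. c1 S = i"
  proof (intro bexI exI ballI)
    show "h ` B0 \<in> copies ar C1 B" using copies_transfer[OF emb onto B0] .
    fix S1 assume S1: "S1 \<in> copies ar (induced C1 (h ` B0)) A"
    have hB0: "h ` B0 \<subseteq> fst C1" using B0sub onto by auto
    have S1': "S1 \<subseteq> h ` B0" "isomorphic ar A (induced C1 S1)"
      using S1 unfolding copies_induced[OF hB0] by auto
    define S where "S = {x \<in> B0. h x \<in> S1}"
    have hS: "h ` S = S1" using S1'(1) unfolding S_def by auto
    have SB0: "S \<subseteq> B0" unfolding S_def by auto
    have e2: "is_embedding ar h (induced C0 S) (induced C1 (h ` S))"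
      using emb_restrict[OF emb] SB0 B0sub by auto
    have "isomorphic ar (induced C1 S1) (induced C0 S)"
    proof -
      have "isomorphic ar (induced C0 S) (induced C1 (h ` S))" unfolding isomorphic_def using e2 by auto
      thus ?thesis using hS iso_sym by simp
    qed
    hence "isomorphic ar A (induced C0 S)" using S1'(2) iso_trans by blast
    hence "S \<in> copies ar (induced C0 B0) A" unfolding copies_induced[OF B0sub] using SB0 by auto
    hence "c0 S = i" using hom by blast
    thus "c1 S1 = i" unfolding c0_def using hS by simp
  qed
qed

lemma arrows_iso:
  assumes "isomorphic ar C0 C1" "arrows ar C0 B A k"
  shows "arrows ar C1 B A k"
proof -
  obtain h where "is_embedding ar h C0 C1" "h ` fst C0 = fst C1" using assms(1) unfolding isomorphic_def by blast
  thus ?thesis using arrows_transfer assms(2) by metis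
qed

lemma arrows_iso_BA:
  assumes "isomorphic ar A A'" "isomorphic ar B B'" "arrows ar C B A k"
  shows "arrows ar C B' A' k"
  unfolding arrows_def
proof (intro allI impI)
  fix c
  have 1: "copies ar C A = copies ar C A'" by (rule copies_iso_left[OF assms(1)])
  have 2: "copies ar C B = copies ar C B'" by (rule copies_iso_left[OF assms(2)])
  have 3: "\<And>W. copies ar (induced C W) A = copies ar (induced C W) A'" by (rule copies_iso_left[OF assms(1)])
  assume "\<forall>S\<in>copies ar C A'. c S < k"
  hence "\<forall>S\<in>copies ar C A. c S < k" using 1 by simp
  hence "\<exists>B'\<in>copies ar C B. \<exists>i. \<forall>S\<in>copies ar (induced C B') A. c S = i"
    using assms(3) unfolding arrows_def by blast
  then obtain W i where "W \<in> copies ar C B" "\<forall>S\<in>copies ar (induced C W) A. c S = i" by blast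
  thus "\<exists>B'\<in>copies ar C B'. \<exists>i. \<forall>S\<in>copies ar (induced C B') A'. c S = i"
    using 2 3 by metis
qed




section \<open>Ranks in finite linearly ordered sets\<close>

definition rank :: "('b \<Rightarrow> 'b \<Rightarrow> bool) \<Rightarrow> 'b set \<Rightarrow> 'b \<Rightarrow> nat" where
  "rank lt U x = card {y \<in> U. lt y x}"

definition enum :: "('b \<Rightarrow> 'b \<Rightarrow> bool) \<Rightarrow> 'b set \<Rightarrow> nat \<Rightarrow> 'b" where
  "enum lt U t = (THE x. x \<in> U \<and> rank lt U x = t)"

lemma slo_subset: "strict_linear_order_on Z lt \<Longrightarrow> U \<subseteq> Z \<Longrightarrow> strict_linear_order_on U lt"
  unfolding strict_linear_order_on_def by blast

context
  fixes lt :: "'b \<Rightarrow> 'b \<Rightarrow> bool" and U :: "'b set"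
  assumes slo: "strict_linear_order_on U lt" and fin: "finite U"
begin

lemma slo_irrefl: "x \<in> U \<Longrightarrow> \<not> lt x x"
  using slo unfolding strict_linear_order_on_def by blast
lemma slo_trans: "x \<in> U \<Longrightarrow> y \<in> U \<Longrightarrow> z \<in> U \<Longrightarrow> lt x y \<Longrightarrow> lt y z \<Longrightarrow> lt x z"
  using slo unfolding strict_linear_order_on_def by blast
lemma slo_total: "x \<in> U \<Longrightarrow> y \<in> U \<Longrightarrow> x \<noteq> y \<Longrightarrow> lt x y \<or> lt y x"
  using slo unfolding strict_linear_order_on_def by blast
lemma slo_asym: "x \<in> U \<Longrightarrow> y \<in> U \<Longrightarrow> lt x y \<Longrightarrow> \<not> lt y x"
  using slo_irrefl slo_trans by blast

lemma rank_mono: "x \<in> U \<Longrightarrow> y \<in> U \<Longrightarrow> lt x y \<Longrightarrow> rank lt U x < rank lt U y"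
  unfolding rank_def
proof (rule psubset_card_mono)
  assume h: "x \<in> U" "y \<in> U" "lt x y"
  show "finite {z \<in> U. lt z y}" using fin by simp
  have "{z \<in> U. lt z x} \<subseteq> {z \<in> U. lt z y}" using h slo_trans by blast
  moreover have "x \<in> {z \<in> U. lt z y}" "x \<notin> {z \<in> U. lt z x}" using h slo_irrefl by auto
  ultimately show "{z \<in> U. lt z x} \<subset> {z \<in> U. lt z y}" by blast
qed

lemma rank_less_iff: "x \<in> U \<Longrightarrow> y \<in> U \<Longrightarrow> rank lt U x < rank lt U y \<longleftrightarrow> lt x y"
  using rank_mono slo_total by (metis less_asym less_irrefl)

lemma rank_inj: "inj_on (rank lt U) U"
  by (rule inj_onI) (metis rank_mono slo_total less_irrefl)

lemma rank_lt_card: "x \<in> U \<Longrightarrow> rank lt U x < card U"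
  unfolding rank_def
proof (rule psubset_card_mono[OF fin])
  assume "x \<in> U"
  thus "{y \<in> U. lt y x} \<subset> U" using slo_irrefl by auto
qed

lemma rank_image: "rank lt U ` U = {..<card U}"
proof -
  have "rank lt U ` U \<subseteq> {..<card U}" using rank_lt_card by auto
  moreover have "card (rank lt U ` U) = card {..<card U}" using card_image[OF rank_inj] by simp
  ultimately show ?thesis by (simp add: card_subset_eq)
qed

lemma enum_props: "t < card U \<Longrightarrow> enum lt U t \<in> U \<and> rank lt U (enum lt U t) = t"
proof -
  assume "t < card U"
  then obtain x where x: "x \<in> U" "rank lt U x = t" using rank_image by (metis imageE lessThan_iff)
  have "\<And>y. y \<in> U \<and> rank lt U y = t \<Longrightarrow> y = x" using x rank_inj by (metis inj_onD)
  hence "enum lt U t = x" unfolding enum_def using x by blast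
  thus ?thesis using x by simp
qed

lemma enum_rank: "x \<in> U \<Longrightarrow> enum lt U (rank lt U x) = x"
  using enum_props rank_lt_card rank_inj by (metis inj_onD)

lemma enum_less_iff: "s < card U \<Longrightarrow> t < card U \<Longrightarrow> lt (enum lt U s) (enum lt U t) \<longleftrightarrow> s < t"
  using enum_props rank_less_iff by metis

lemma enum_inj: "s < card U \<Longrightarrow> t < card U \<Longrightarrow> enum lt U s = enum lt U t \<Longrightarrow> s = t"
  using enum_props by metis

end

lemma rank_transfer:
  assumes inj: "inj_on f U" and V: "V = f ` U"
    and pres: "\<forall>x\<in>U. \<forall>y\<in>U. lt y x \<longleftrightarrow> lt' (f y) (f x)" and x: "x \<in> U"
  shows "rank lt' V (f x) = rank lt U x"
proof -
  have "{y \<in> V. lt' y (f x)} = f ` {y \<in> U. lt y x}" using pres x V by auto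
  moreover have "inj_on f {y \<in> U. lt y x}" using inj by (rule inj_on_subset) auto
  ultimately show ?thesis unfolding rank_def by (simp add: card_image)
qed




lemma len2: "length t = 2 \<Longrightarrow> \<exists>a b. t = [a,b]"
  by (auto simp: numeral_2_eq_2 length_Suc_conv)

lemma emb_rel: "is_embedding ar f A B \<Longrightarrow> length t = ar R \<Longrightarrow> set t \<subseteq> fst A \<Longrightarrow>
    (t \<in> snd A R \<longleftrightarrow> map f t \<in> snd B R)"
  by (simp add: is_embedding_def)

lemma emb_inj: "is_embedding ar f A B \<Longrightarrow> inj_on f (fst A)"
  by (simp add: is_embedding_def)

lemma emb_pair: "is_embedding ar f A B \<Longrightarrow> ar R = 2 \<Longrightarrow> x \<in> fst A \<Longrightarrow> y \<in> fst A \<Longrightarrow>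
    ([x,y] \<in> snd A R \<longleftrightarrow> [f x, f y] \<in> snd B R)"
  using emb_rel[of ar f A B "[x,y]" R] by simp

lemma emb_induced_I:
  assumes "inj_on f P" "f ` P \<subseteq> Q"
    "\<And>R t. length t = ar R \<Longrightarrow> set t \<subseteq> P \<Longrightarrow> (t \<in> snd F R \<longleftrightarrow> map f t \<in> snd G R)"
  shows "is_embedding ar f (induced F P) (induced G Q)"
  unfolding is_embedding_def
proof (intro conjI allI impI)
  show "inj_on f (fst (induced F P))" using assms(1) by simp
  show "f ` fst (induced F P) \<subseteq> fst (induced G Q)" using assms(2) by simp
  fix R t assume h: "length t = ar R \<and> set t \<subseteq> fst (induced F P)"
  hence "set (map f t) \<subseteq> Q" using assms(2) by auto
  thus "(t \<in> snd (induced F P) R) = (map f t \<in> snd (induced G Q) R)"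
    using h assms(3)[of t R] by (simp add: snd_induced)
qed

locale setting =
  fixes ar :: "'l \<Rightarrow> nat" and Ts :: "('l, 'a) str" and Esym Ltsym :: 'l
    and prec :: "nat \<Rightarrow> nat \<Rightarrow> bool"
  assumes neq: "Esym \<noteq> Ltsym" and arE: "ar Esym = 2" and arL: "ar Ltsym = 2"
    and wfT: "wf_str ar Ts"
    and tour: "tournament (fst Ts) (\<lambda>x y. [x, y] \<in> snd Ts Esym)"
    and sloL: "strict_linear_order_on (fst Ts) (\<lambda>x y. [x, y] \<in> snd Ts Ltsym)"
    and sloP: "strict_linear_order_on UNIV prec"
begin

definition L :: "'a \<Rightarrow> 'a \<Rightarrow> bool" where "L x y \<longleftrightarrow> [x, y] \<in> snd Ts Ltsym"
abbreviation "Bl \<equiv> blowup Esym Ltsym prec Ts"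
definition ltB :: "'a \<times> nat \<Rightarrow> 'a \<times> nat \<Rightarrow> bool" where "ltB a b \<longleftrightarrow> [a, b] \<in> snd Bl Ltsym"

lemma sloL': "strict_linear_order_on (fst Ts) L"
  using sloL unfolding L_def[abs_def] .

lemma Bl_fst: "fst Bl = fst Ts \<times> UNIV"
  unfolding blowup_def by simp

lemma Bl_E: "[a,b] \<in> snd Bl Esym \<longleftrightarrow> fst a \<in> fst Ts \<and> fst b \<in> fst Ts \<and> [fst a, fst b] \<in> snd Ts Esym"
  unfolding blowup_def by (cases a; cases b) auto

lemma Bl_L: "ltB a b \<longleftrightarrow> fst a \<in> fst Ts \<and> fst b \<in> fst Ts \<and> (L (fst a) (fst b) \<or> (fst a = fst b \<and> prec (snd a) (snd b)))"
  unfolding ltB_def L_def blowup_def using neq by (cases a; cases b) auto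

lemma Bl_R: "R \<noteq> Esym \<Longrightarrow> R \<noteq> Ltsym \<Longrightarrow> t \<in> snd Bl R \<longleftrightarrow> set t \<subseteq> fst Bl \<and> map fst t \<in> snd Ts R"
  unfolding blowup_def by simp

lemma wf_Bl: "wf_str ar Bl"
  unfolding wf_str_def
proof (intro allI ballI)
  fix R t assume t: "t \<in> snd Bl R"
  show "length t = ar R \<and> set t \<subseteq> fst Bl"
  proof (cases "R = Esym \<or> R = Ltsym")
    case True
    hence "\<exists>a b. t = [a,b] \<and> fst a \<in> fst Ts \<and> fst b \<in> fst Ts"
      using t neq unfolding blowup_def by auto
    then show ?thesis using True arE arL Bl_fst by (auto simp: mem_Times_iff)
  next
    case False
    hence "set t \<subseteq> fst Bl" "map fst t \<in> snd Ts R" using t Bl_R by auto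
    moreover have "length (map fst t) = ar R" using wfT calculation(2) unfolding wf_str_def by blast
    ultimately show ?thesis by simp
  qed
qed

lemma L_irrefl: "\<not> L x x"
proof
  assume "L x x"
  hence "x \<in> fst Ts" using wfT unfolding wf_str_def L_def by fastforce
  thus False using sloL' \<open>L x x\<close> unfolding strict_linear_order_on_def by blast
qed

lemma E_irrefl: "[x,x] \<notin> snd Ts Esym"
proof
  assume h: "[x,x] \<in> snd Ts Esym"
  hence "x \<in> fst Ts" using wfT unfolding wf_str_def by fastforce
  thus False using tour h unfolding tournament_def by blast
qed

lemma prec_irrefl: "\<not> prec x x" using sloP unfolding strict_linear_order_on_def by blast
lemma prec_trans: "prec x y \<Longrightarrow> prec y z \<Longrightarrow> prec x z" using sloP unfolding strict_linear_order_on_def by blast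
lemma prec_total: "x \<noteq> y \<Longrightarrow> prec x y \<or> prec y x" using sloP unfolding strict_linear_order_on_def by blast

lemma L_trans: "x \<in> fst Ts \<Longrightarrow> y \<in> fst Ts \<Longrightarrow> z \<in> fst Ts \<Longrightarrow> L x y \<Longrightarrow> L y z \<Longrightarrow> L x z"
  using sloL' unfolding strict_linear_order_on_def by blast
lemma L_total: "x \<in> fst Ts \<Longrightarrow> y \<in> fst Ts \<Longrightarrow> x \<noteq> y \<Longrightarrow> L x y \<or> L y x"
  using sloL' unfolding strict_linear_order_on_def by blast

lemma lex_trans_aux: "(L a b \<or> (a = b \<and> prec i j)) \<Longrightarrow> (L b c \<or> (b = c \<and> prec j k)) \<Longrightarrow> (L a b \<Longrightarrow> L b c \<Longrightarrow> L a c) \<Longrightarrow> L a c \<or> (a = c \<and> prec i k)"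
  using prec_trans by metis

lemma ltB_trans: "x \<in> fst Bl \<Longrightarrow> y \<in> fst Bl \<Longrightarrow> z \<in> fst Bl \<Longrightarrow> ltB x y \<Longrightarrow> ltB y z \<Longrightarrow> ltB x z"
proof -
  assume m: "x \<in> fst Bl" "y \<in> fst Bl" "z \<in> fst Bl" and xy: "ltB x y" and yz: "ltB y z"
  have T: "fst x \<in> fst Ts" "fst y \<in> fst Ts" "fst z \<in> fst Ts" using m Bl_fst by auto
  have h1: "L (fst x) (fst y) \<or> (fst x = fst y \<and> prec (snd x) (snd y))" using xy Bl_L[of x y] by blast
  have h2: "L (fst y) (fst z) \<or> (fst y = fst z \<and> prec (snd y) (snd z))" using yz Bl_L[of y z] by blast
  have "L (fst x) (fst z) \<or> (fst x = fst z \<and> prec (snd x) (snd z))"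
    by (rule lex_trans_aux[OF h1 h2 L_trans[OF T]])
  thus "ltB x z" using Bl_L[of x z] T by blast
qed

lemma ltB_total: "x \<in> fst Bl \<Longrightarrow> y \<in> fst Bl \<Longrightarrow> x \<noteq> y \<Longrightarrow> ltB x y \<or> ltB y x"
proof -
  assume h: "x \<in> fst Bl" "y \<in> fst Bl" "x \<noteq> y"
  show "ltB x y \<or> ltB y x"
  proof (cases "fst x = fst y")
    case True
    hence "snd x \<noteq> snd y" using h by (metis prod.expand)
    hence "prec (snd x) (snd y) \<or> prec (snd y) (snd x)" by (rule prec_total)
    moreover have "fst x \<in> fst Ts" using h Bl_fst by auto
    ultimately show ?thesis using True Bl_L[of x y] Bl_L[of y x] by metis
  next
    case False
    have T: "fst x \<in> fst Ts" "fst y \<in> fst Ts" using h Bl_fst by auto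
    hence "L (fst x) (fst y) \<or> L (fst y) (fst x)" using False L_total by blast
    thus ?thesis using T Bl_L[of x y] Bl_L[of y x] by blast
  qed
qed

lemma ltB_irrefl: "\<not> ltB x x" using Bl_L[of x x] L_irrefl prec_irrefl by blast

lemma sloB: "strict_linear_order_on (fst Bl) ltB"
  unfolding strict_linear_order_on_def using ltB_irrefl ltB_trans ltB_total by blast

lemma same_block:
  assumes "a \<in> fst Bl" "b \<in> fst Bl" "a \<noteq> b"
  shows "fst a = fst b \<longleftrightarrow> [a,b] \<notin> snd Bl Esym \<and> [b,a] \<notin> snd Bl Esym"
proof (cases "fst a = fst b")
  case True thus ?thesis using Bl_E[of a b] Bl_E[of b a] E_irrefl by auto
next
  case False
  have "fst a \<in> fst Ts" "fst b \<in> fst Ts" using assms Bl_fst by auto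
  hence "[fst a, fst b] \<in> snd Ts Esym \<or> [fst b, fst a] \<in> snd Ts Esym"
    using tour False unfolding tournament_def by blast
  thus ?thesis using False Bl_E[of a b] Bl_E[of b a] \<open>fst a \<in> fst Ts\<close> \<open>fst b \<in> fst Ts\<close> by auto
qed

end



lemma iso_Ts_list:
  assumes "is_embedding ar \<phi> (induced F P) (induced F q)" "length t = ar R" "set t \<subseteq> P"
  shows "t \<in> snd F R \<longleftrightarrow> map \<phi> t \<in> snd F R"
proof -
  have im: "\<phi> ` P \<subseteq> q" using assms(1) unfolding is_embedding_def by simp
  have "t \<in> snd (induced F P) R \<longleftrightarrow> map \<phi> t \<in> snd (induced F q) R"
    using emb_rel[OF assms(1) assms(2)] assms(3) by simp
  moreover have "set (map \<phi> t) \<subseteq> q" using im assms(3) by auto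
  ultimately show ?thesis using assms(3) by (simp add: snd_induced)
qed

lemma iso_Ts_pair:
  assumes "is_embedding ar \<phi> (induced F P) (induced F q)" "ar R = 2" "x \<in> P" "y \<in> P"
  shows "[x,y] \<in> snd F R \<longleftrightarrow> [\<phi> x, \<phi> y] \<in> snd F R"
  using iso_Ts_list[OF assms(1), of "[x,y]" R] assms by simp

context setting
begin

definition embS :: "('a \<times> nat) set \<Rightarrow> ('a \<Rightarrow> 'a) \<Rightarrow> nat set \<Rightarrow> 'a \<times> nat \<Rightarrow> 'a \<times> nat" where
  "embS S \<phi> U s = (\<phi> (fst s), enum prec U (rank ltB S s))"

lemma lex_aux: "(Lxy \<Longrightarrow> p) \<Longrightarrow> (\<not> Lxy \<Longrightarrow> x \<noteq> y \<Longrightarrow> \<not> p) \<Longrightarrow> (p \<longleftrightarrow> Lxy \<or> (x = y \<and> p))"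
  by blast

lemma embS_props:
  assumes S: "S \<subseteq> fst Bl" "finite S"
    and phi: "is_embedding ar \<phi> (induced Ts (fst ` S)) (induced Ts q)" "\<phi> ` fst ` S = q"
    and q: "q \<subseteq> fst Ts" and U: "finite U" "card U = card S"
  shows "is_embedding ar (embS S \<phi> U) (induced Bl S) (induced Bl (embS S \<phi> U ` S))"
    and "\<forall>a\<in>S. \<forall>b\<in>S. ltB a b \<longleftrightarrow> prec (snd (embS S \<phi> U a)) (snd (embS S \<phi> U b))"
    and "embS S \<phi> U ` S \<subseteq> q \<times> U"
proof -
  let ?e = "embS S \<phi> U"
  let ?r = "rank ltB S"
  let ?en = "enum prec U"
  have sloS: "strict_linear_order_on S ltB" using slo_subset[OF sloB S(1)] .
  have sloU: "strict_linear_order_on U prec" using slo_subset[OF sloP] by blast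
  have rS: "\<And>s. s \<in> S \<Longrightarrow> ?r s < card U" using rank_lt_card[OF sloS S(2)] U(2) by simp
  have enU: "\<And>t. t < card U \<Longrightarrow> ?en t \<in> U" using enum_props[OF sloU U(1)] by blast
  have eU: "\<And>s. s \<in> S \<Longrightarrow> snd (?e s) \<in> U" unfolding embS_def using rS enU by simp
  have fstS: "\<And>s. s \<in> S \<Longrightarrow> fst s \<in> fst Ts" using S(1) Bl_fst by auto
  have phiq: "\<And>x. x \<in> fst ` S \<Longrightarrow> \<phi> x \<in> q" using phi(2) by auto
  have eq: "\<And>s. s \<in> S \<Longrightarrow> fst (?e s) \<in> q" unfolding embS_def using phiq by simp
  have eT: "\<And>s. s \<in> S \<Longrightarrow> fst (?e s) \<in> fst Ts" using eq q by auto
  have ord: "\<And>a b. a \<in> S \<Longrightarrow> b \<in> S \<Longrightarrow> ltB a b \<longleftrightarrow> prec (snd (?e a)) (snd (?e b))"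
  proof -
    fix a b assume ab: "a \<in> S" "b \<in> S"
    have "ltB a b \<longleftrightarrow> ?r a < ?r b" using rank_less_iff[OF sloS S(2) ab] by simp
    also have "\<dots> \<longleftrightarrow> prec (?en (?r a)) (?en (?r b))"
      using enum_less_iff[OF sloU U(1) rS[OF ab(1)] rS[OF ab(2)]] by simp
    finally show "ltB a b \<longleftrightarrow> prec (snd (?e a)) (snd (?e b))" unfolding embS_def by simp
  qed
  thus "\<forall>a\<in>S. \<forall>b\<in>S. ltB a b \<longleftrightarrow> prec (snd (?e a)) (snd (?e b))" by blast
  show "?e ` S \<subseteq> q \<times> U"
  proof
    fix y assume "y \<in> ?e ` S"
    then obtain s where "s \<in> S" "y = ?e s" by blast
    thus "y \<in> q \<times> U" using eq eU mem_Times_iff by metis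
  qed
  have injS: "inj_on ?e S"
  proof (rule inj_onI)
    fix a b assume ab: "a \<in> S" "b \<in> S" "?e a = ?e b"
    hence "?en (?r a) = ?en (?r b)" unfolding embS_def by simp
    hence "?r a = ?r b" using enum_inj[OF sloU U(1) rS[OF ab(1)] rS[OF ab(2)]] by simp
    thus "a = b" using rank_inj[OF sloS S(2)] ab(1,2) by (meson inj_onD)
  qed
  have phiE: "\<And>x y. x \<in> fst ` S \<Longrightarrow> y \<in> fst ` S \<Longrightarrow> ([x,y] \<in> snd Ts Esym \<longleftrightarrow> [\<phi> x, \<phi> y] \<in> snd Ts Esym)"
    using iso_Ts_pair[OF phi(1) arE] .
  have phiL: "\<And>x y. x \<in> fst ` S \<Longrightarrow> y \<in> fst ` S \<Longrightarrow> (L x y \<longleftrightarrow> L (\<phi> x) (\<phi> y))"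
    using iso_Ts_pair[OF phi(1) arL] unfolding L_def .
  have phiinj: "inj_on \<phi> (fst ` S)" using phi(1) unfolding is_embedding_def by simp
  show "is_embedding ar ?e (induced Bl S) (induced Bl (?e ` S))"
  proof (rule emb_induced_I[OF injS subset_refl])
    fix R t assume t: "length t = ar R" "set t \<subseteq> S"
    show "t \<in> snd Bl R \<longleftrightarrow> map ?e t \<in> snd Bl R"
    proof (cases "R = Esym")
      case True
      then obtain a b where tab: "t = [a,b]" using t(1) arE len2 by metis
      have ab: "a \<in> S" "b \<in> S" using t(2) tab by auto
      have "[a,b] \<in> snd Bl Esym \<longleftrightarrow> [fst a, fst b] \<in> snd Ts Esym"
        using Bl_E[of a b] fstS[OF ab(1)] fstS[OF ab(2)] by blast
      also have "\<dots> \<longleftrightarrow> [fst (?e a), fst (?e b)] \<in> snd Ts Esym"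
        using phiE[of "fst a" "fst b"] ab unfolding embS_def by simp
      also have "\<dots> \<longleftrightarrow> [?e a, ?e b] \<in> snd Bl Esym"
        using Bl_E[of "?e a" "?e b"] eT[OF ab(1)] eT[OF ab(2)] by blast
      finally show ?thesis using True tab by simp
    next
      case notE: False
      show ?thesis
      proof (cases "R = Ltsym")
        case True
        then obtain a b where tab: "t = [a,b]" using t(1) arL len2 by metis
        have ab: "a \<in> S" "b \<in> S" using t(2) tab by auto
        let ?p = "prec (snd (?e a)) (snd (?e b))"
        have 1: "ltB a b \<longleftrightarrow> ?p" using ord[OF ab] .
        have 2: "ltB (?e a) (?e b) \<longleftrightarrow> L (fst (?e a)) (fst (?e b)) \<or> (fst (?e a) = fst (?e b) \<and> ?p)"
          using Bl_L[of "?e a" "?e b"] eT[OF ab(1)] eT[OF ab(2)] by blast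
        have 3: "L (fst (?e a)) (fst (?e b)) \<longleftrightarrow> L (fst a) (fst b)"
          using phiL[of "fst a" "fst b"] ab unfolding embS_def by simp
        have 4: "fst (?e a) = fst (?e b) \<longleftrightarrow> fst a = fst b"
          using phiinj ab unfolding embS_def inj_on_def by auto
        have 5: "ltB a b \<longleftrightarrow> L (fst a) (fst b) \<or> (fst a = fst b \<and> prec (snd a) (snd b))"
          using Bl_L[of a b] fstS[OF ab(1)] fstS[OF ab(2)] by blast
        have "?p \<longleftrightarrow> L (fst a) (fst b) \<or> (fst a = fst b \<and> ?p)"
        proof (rule lex_aux)
          assume "L (fst a) (fst b)" thus ?p using 1 5 by blast
        next
          assume "\<not> L (fst a) (fst b)" "fst a \<noteq> fst b" thus "\<not> ?p" using 1 5 by blast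
        qed
        hence "ltB a b \<longleftrightarrow> ltB (?e a) (?e b)" using 1 2 3 4 by simp
        thus ?thesis using True tab unfolding ltB_def by simp
      next
        case notL: False
        have st: "set t \<subseteq> fst Bl" using t(2) S(1) by auto
        have st': "set (map ?e t) \<subseteq> fst Bl"
        proof
          fix y assume "y \<in> set (map ?e t)"
          then obtain s where "s \<in> S" "y = ?e s" using t(2) by auto
          thus "y \<in> fst Bl" using eT Bl_fst mem_Times_iff by (metis UNIV_I)
        qed
        have mf: "map fst (map ?e t) = map \<phi> (map fst t)" unfolding embS_def by simp
        have "map fst t \<in> snd Ts R \<longleftrightarrow> map \<phi> (map fst t) \<in> snd Ts R"
          using iso_Ts_list[OF phi(1), of "map fst t" R] t by auto
        moreover have A: "t \<in> snd Bl R \<longleftrightarrow> map fst t \<in> snd Ts R" using Bl_R[OF notE notL, of t] st by blast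
        moreover have B: "map ?e t \<in> snd Bl R \<longleftrightarrow> map fst (map ?e t) \<in> snd Ts R"
          using Bl_R[OF notE notL, of "map ?e t"] st' by blast
        ultimately show ?thesis unfolding mf by blast
      qed
    qed
  qed
qed

end



context setting
begin

lemma iso_unique:
  assumes P: "P \<subseteq> fst Ts" "finite P" and q: "q \<subseteq> fst Ts"
    and f1: "is_embedding ar \<phi>1 (induced Ts P) (induced Ts q)" "\<phi>1 ` P = q"
    and f2: "is_embedding ar \<phi>2 (induced Ts P) (induced Ts q)" "\<phi>2 ` P = q"
    and x: "x \<in> P"
  shows "\<phi>1 x = \<phi>2 x"
proof -
  have sloPP: "strict_linear_order_on P L" using slo_subset[OF sloL' P(1)] .
  have sloq: "strict_linear_order_on q L" using slo_subset[OF sloL' q] .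
  have finq: "finite q" using f1(2) P(2) by blast
  have r: "\<And>\<phi>. is_embedding ar \<phi> (induced Ts P) (induced Ts q) \<Longrightarrow> \<phi> ` P = q \<Longrightarrow> rank L q (\<phi> x) = rank L P x"
  proof -
    fix \<phi> assume e: "is_embedding ar \<phi> (induced Ts P) (induced Ts q)" and im: "\<phi> ` P = q"
    have inj: "inj_on \<phi> P" using emb_inj[OF e] by simp
    have pres: "\<forall>a\<in>P. \<forall>b\<in>P. L b a \<longleftrightarrow> L (\<phi> b) (\<phi> a)"
      using iso_Ts_pair[OF e arL] unfolding L_def by blast
    show "rank L q (\<phi> x) = rank L P x" using rank_transfer[OF inj im[symmetric] pres x] .
  qed
  have "rank L q (\<phi>1 x) = rank L q (\<phi>2 x)" using r[OF f1] r[OF f2] by simp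
  moreover have "\<phi>1 x \<in> q" "\<phi>2 x \<in> q" using f1(2) f2(2) x by auto
  ultimately show ?thesis using rank_inj[OF sloq finq] by (meson inj_onD)
qed

lemma ordIff_aux:
  assumes "\<forall>a\<in>S'. \<forall>b\<in>S'. ltB a b \<longrightarrow> prec (snd a) (snd b)" "S' \<subseteq> fst Bl" "a \<in> S'" "b \<in> S'"
  shows "ltB a b \<longleftrightarrow> prec (snd a) (snd b)"
proof
  assume "ltB a b" thus "prec (snd a) (snd b)" using assms by blast
next
  assume p: "prec (snd a) (snd b)"
  show "ltB a b"
  proof (rule ccontr)
    assume n: "\<not> ltB a b"
    have "a \<noteq> b" using p prec_irrefl by auto
    hence "ltB b a" using n ltB_total assms(2-4) by blast
    hence "prec (snd b) (snd a)" using assms by blast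
    thus False using p prec_trans prec_irrefl by blast
  qed
qed

lemma copy_form:
  assumes S: "S \<subseteq> fst Bl" "finite S" and S': "S' \<subseteq> fst Bl"
    and psi: "is_embedding ar \<psi> (induced Bl S) (induced Bl S')" "\<psi> ` S = S'"
    and ordS': "\<forall>a\<in>S'. \<forall>b\<in>S'. ltB a b \<longrightarrow> prec (snd a) (snd b)"
  shows "\<exists>\<phi>. is_embedding ar \<phi> (induced Ts (fst ` S)) (induced Ts (fst ` S')) \<and> \<phi> ` fst ` S = fst ` S'
           \<and> S' = embS S \<phi> (snd ` S') ` S \<and> card (snd ` S') = card S"
proof -
  have pinj: "inj_on \<psi> S" using emb_inj[OF psi(1)] by simp
  have pmem: "\<And>a. a \<in> S \<Longrightarrow> \<psi> a \<in> S'" using psi(2) by blast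
  have pE: "\<And>a b. a \<in> S \<Longrightarrow> b \<in> S \<Longrightarrow> [a,b] \<in> snd Bl Esym \<longleftrightarrow> [\<psi> a, \<psi> b] \<in> snd Bl Esym"
    using iso_Ts_pair[OF psi(1) arE] by blast
  have pL: "\<And>a b. a \<in> S \<Longrightarrow> b \<in> S \<Longrightarrow> ltB a b \<longleftrightarrow> ltB (\<psi> a) (\<psi> b)"
    using iso_Ts_pair[OF psi(1) arL] unfolding ltB_def by blast
  have pR: "\<And>R t. length t = ar R \<Longrightarrow> set t \<subseteq> S \<Longrightarrow> t \<in> snd Bl R \<longleftrightarrow> map \<psi> t \<in> snd Bl R"
    using iso_Ts_list[OF psi(1)] by blast
  have inBl: "\<And>a. a \<in> S \<Longrightarrow> a \<in> fst Bl" using S(1) by blast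
  have inBl': "\<And>a. a \<in> S \<Longrightarrow> \<psi> a \<in> fst Bl" using S' pmem by blast
  have fT: "\<And>a. a \<in> fst Bl \<Longrightarrow> fst a \<in> fst Ts" using Bl_fst by auto
  have blk: "\<And>a b. a \<in> S \<Longrightarrow> b \<in> S \<Longrightarrow> fst a = fst b \<longleftrightarrow> fst (\<psi> a) = fst (\<psi> b)"
  proof -
    fix a b assume ab: "a \<in> S" "b \<in> S"
    show "fst a = fst b \<longleftrightarrow> fst (\<psi> a) = fst (\<psi> b)"
    proof (cases "a = b")
      case True thus ?thesis by simp
    next
      case False
      hence "\<psi> a \<noteq> \<psi> b" using pinj ab by (meson inj_onD)
      thus ?thesis using same_block[OF inBl[OF ab(1)] inBl[OF ab(2)] False]
          same_block[OF inBl'[OF ab(1)] inBl'[OF ab(2)]] pE[OF ab] pE[OF ab(2) ab(1)] by blast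
    qed
  qed
  define sel where "sel x = (SOME s. s \<in> S \<and> fst s = x)" for x
  have sel: "\<And>x. x \<in> fst ` S \<Longrightarrow> sel x \<in> S \<and> fst (sel x) = x"
  proof -
    fix x assume "x \<in> fst ` S"
    hence "\<exists>s. s \<in> S \<and> fst s = x" by blast
    thus "sel x \<in> S \<and> fst (sel x) = x" unfolding sel_def by (rule someI_ex)
  qed
  define \<phi> where "\<phi> x = fst (\<psi> (sel x))" for x
  have phi_fst: "\<And>s. s \<in> S \<Longrightarrow> \<phi> (fst s) = fst (\<psi> s)"
  proof -
    fix s assume s: "s \<in> S"
    hence "sel (fst s) \<in> S" "fst (sel (fst s)) = fst s" using sel by auto
    thus "\<phi> (fst s) = fst (\<psi> s)" unfolding \<phi>_def using blk s by blast
  qed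
  have phi_im: "\<phi> ` fst ` S = fst ` S'"
  proof -
    have "\<phi> ` fst ` S = (\<lambda>s. fst (\<psi> s)) ` S" unfolding image_image using phi_fst by (rule image_cong[OF refl])
    also have "\<dots> = fst ` S'" using psi(2) by auto
    finally show ?thesis .
  qed
  have phi_inj: "inj_on \<phi> (fst ` S)"
  proof (rule inj_onI)
    fix x y assume "x \<in> fst ` S" "y \<in> fst ` S" and e: "\<phi> x = \<phi> y"
    then obtain a b where ab: "a \<in> S" "b \<in> S" "x = fst a" "y = fst b" by blast
    thus "x = y" using e phi_fst blk by metis
  qed
  have selT: "\<And>x. x \<in> fst ` S \<Longrightarrow> x \<in> fst Ts" using S(1) Bl_fst by auto
  have psel: "\<And>x. x \<in> fst ` S \<Longrightarrow> fst (\<psi> (sel x)) \<in> fst Ts" using sel inBl' fT by blast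
  have emb: "is_embedding ar \<phi> (induced Ts (fst ` S)) (induced Ts (fst ` S'))"
  proof (rule emb_induced_I[OF phi_inj])
    show "\<phi> ` fst ` S \<subseteq> fst ` S'" using phi_im by simp
    fix R t assume t: "length t = ar R" "set t \<subseteq> fst ` S"
    define t' where "t' = map sel t"
    have t'S: "set t' \<subseteq> S"
    proof
      fix z assume "z \<in> set t'"
      then obtain x where "x \<in> set t" "z = sel x" unfolding t'_def by auto
      thus "z \<in> S" using t(2) sel by blast
    qed
    have t'f: "map fst t' = t" unfolding t'_def using t(2) sel by (induct t) auto
    have t'p: "map fst (map \<psi> t') = map \<phi> t" unfolding t'_def \<phi>_def by simp
    show "t \<in> snd Ts R \<longleftrightarrow> map \<phi> t \<in> snd Ts R"
    proof (cases "R = Esym")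
      case True
      then obtain x y where txy: "t = [x,y]" using t(1) arE len2 by metis
      have xy: "x \<in> fst ` S" "y \<in> fst ` S" using t(2) txy by auto
      have "[x,y] \<in> snd Ts Esym \<longleftrightarrow> [sel x, sel y] \<in> snd Bl Esym"
        using Bl_E[of "sel x" "sel y"] sel[OF xy(1)] sel[OF xy(2)] selT[OF xy(1)] selT[OF xy(2)] by simp
      also have "\<dots> \<longleftrightarrow> [\<psi> (sel x), \<psi> (sel y)] \<in> snd Bl Esym" using pE sel xy by blast
      also have "\<dots> \<longleftrightarrow> [\<phi> x, \<phi> y] \<in> snd Ts Esym"
        using Bl_E[of "\<psi> (sel x)" "\<psi> (sel y)"] psel[OF xy(1)] psel[OF xy(2)] unfolding \<phi>_def by simp
      finally show ?thesis using True txy by simp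
    next
      case notE: False
      show ?thesis
      proof (cases "R = Ltsym")
        case True
        then obtain x y where txy: "t = [x,y]" using t(1) arL len2 by metis
        have xy: "x \<in> fst ` S" "y \<in> fst ` S" using t(2) txy by auto
        have "L x y \<longleftrightarrow> L (\<phi> x) (\<phi> y)"
        proof (cases "x = y")
          case True thus ?thesis using L_irrefl by simp
        next
          case False
          have s1: "sel x \<in> S" "fst (sel x) = x" "sel y \<in> S" "fst (sel y) = y" using sel xy by auto
          have "L x y \<longleftrightarrow> ltB (sel x) (sel y)"
            using Bl_L[of "sel x" "sel y"] s1 False selT[OF xy(1)] selT[OF xy(2)] by auto
          also have "\<dots> \<longleftrightarrow> ltB (\<psi> (sel x)) (\<psi> (sel y))" using pL s1 by blast
          also have "\<dots> \<longleftrightarrow> L (\<phi> x) (\<phi> y)"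
          proof -
            have "fst (\<psi> (sel x)) \<noteq> fst (\<psi> (sel y))" using blk s1 False by metis
            thus ?thesis using Bl_L[of "\<psi> (sel x)" "\<psi> (sel y)"] psel[OF xy(1)] psel[OF xy(2)] unfolding \<phi>_def by auto
          qed
          finally show ?thesis .
        qed
        thus ?thesis using True txy unfolding L_def by simp
      next
        case notL: False
        have st: "set t' \<subseteq> fst Bl" using t'S S(1) by auto
        have st': "set (map \<psi> t') \<subseteq> fst Bl" using t'S inBl' by auto
        have len: "length t' = ar R" using t(1) unfolding t'_def by simp
        have A: "t' \<in> snd Bl R \<longleftrightarrow> map fst t' \<in> snd Ts R" using Bl_R[OF notE notL, of t'] st by blast
        have B: "map \<psi> t' \<in> snd Bl R \<longleftrightarrow> map fst (map \<psi> t') \<in> snd Ts R"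
          using Bl_R[OF notE notL, of "map \<psi> t'"] st' by blast
        have "t' \<in> snd Bl R \<longleftrightarrow> map \<psi> t' \<in> snd Bl R" using pR[OF len t'S] .
        thus ?thesis using A B unfolding t'f t'p by blast
      qed
    qed
  qed
  define U where "U = snd ` S'"
  have finS': "finite S'" using psi(2) S(2) by blast
  have finU: "finite U" using finS' unfolding U_def by simp
  have sloS': "strict_linear_order_on S' ltB" using slo_subset[OF sloB S'] .
  have sloS: "strict_linear_order_on S ltB" using slo_subset[OF sloB S(1)] .
  have sloU: "strict_linear_order_on U prec" using slo_subset[OF sloP] by blast
  have oi: "\<And>a b. a \<in> S' \<Longrightarrow> b \<in> S' \<Longrightarrow> ltB a b \<longleftrightarrow> prec (snd a) (snd b)"
    using ordIff_aux[OF ordS' S'] by blast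
  have sinj: "inj_on snd S'"
  proof (rule inj_onI)
    fix a b assume ab: "a \<in> S'" "b \<in> S'" "snd a = snd b"
    show "a = b"
    proof (rule ccontr)
      assume "a \<noteq> b"
      hence "ltB a b \<or> ltB b a" using ltB_total ab S' by blast
      thus False using oi ab prec_irrefl by metis
    qed
  qed
  have cardU: "card U = card S"
  proof -
    have "card U = card S'" unfolding U_def using card_image[OF sinj] .
    also have "\<dots> = card S" using card_image[OF pinj] psi(2) by simp
    finally show ?thesis .
  qed
  have eq: "\<And>s. s \<in> S \<Longrightarrow> \<psi> s = embS S \<phi> U s"
  proof -
    fix s assume s: "s \<in> S"
    have presS: "\<forall>x\<in>S. \<forall>y\<in>S. ltB y x \<longleftrightarrow> ltB (\<psi> y) (\<psi> x)" using pL by blast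
    have r1: "rank ltB S' (\<psi> s) = rank ltB S s" using rank_transfer[OF pinj psi(2)[symmetric] presS s] .
    have presU: "\<forall>x\<in>S'. \<forall>y\<in>S'. ltB y x \<longleftrightarrow> prec (snd y) (snd x)" using oi by blast
    have r2: "rank prec U (snd (\<psi> s)) = rank ltB S' (\<psi> s)"
      using rank_transfer[OF sinj U_def presU pmem[OF s]] .
    have "snd (\<psi> s) \<in> U" using pmem[OF s] unfolding U_def by blast
    hence "enum prec U (rank prec U (snd (\<psi> s))) = snd (\<psi> s)" using enum_rank[OF sloU finU] by blast
    hence "snd (\<psi> s) = enum prec U (rank ltB S s)" using r1 r2 by simp
    moreover have "fst (\<psi> s) = \<phi> (fst s)" using phi_fst[OF s] by simp
    ultimately show "\<psi> s = embS S \<phi> U s" unfolding embS_def by (simp add: prod_eq_iff)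
  qed
  have "S' = embS S \<phi> U ` S" using psi(2) eq by (metis image_cong)
  thus ?thesis using emb phi_im cardU unfolding U_def by blast
qed

end



context setting
begin

theorem main:
  assumes ram: "ramsey_class ar (age ar Ts)"
  shows "ramsey_class ar (age ar Bl)"
  unfolding ramsey_class_def
proof (intro allI impI ballI)
  fix k :: nat and A B
  assume k: "1 \<le> k" and A: "A \<in> age ar Bl" and B: "B \<in> age ar Bl"
  obtain fA where fA: "is_embedding ar fA A Bl" and finA: "finite (fst A)" using A unfolding age_def by blast
  obtain fB where fB: "is_embedding ar fB B Bl" and finB: "finite (fst B)" using B unfolding age_def by blast
  define SA where "SA = fA ` fst A"
  define SB where "SB = fB ` fst B"
  have finSA: "finite SA" and finSB: "finite SB" using finA finB unfolding SA_def SB_def by auto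
  have SAsub: "SA \<subseteq> fst Bl" using fA unfolding SA_def is_embedding_def by simp
  have SBsub: "SB \<subseteq> fst Bl" using fB unfolding SB_def is_embedding_def by simp
  have isoA: "isomorphic ar A (induced Bl SA)" unfolding SA_def by (rule emb_iso_image[OF fA])
  have isoB: "isomorphic ar B (induced Bl SB)" unfolding SB_def by (rule emb_iso_image[OF fB])
  define PA where "PA = fst ` SA"
  define PB where "PB = fst ` SB"
  have PAsub: "PA \<subseteq> fst Ts" using SAsub Bl_fst unfolding PA_def by auto
  have PBsub: "PB \<subseteq> fst Ts" using SBsub Bl_fst unfolding PB_def by auto
  have finPA: "finite PA" using finSA unfolding PA_def by simp
  have finPB: "finite PB" using finSB unfolding PB_def by simp
  obtain DA where DA: "DA \<in> age ar Ts" "isomorphic ar DA (induced Ts PA)" using finite_rep[OF wfT finPA PAsub] by blast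
  obtain DB where DB: "DB \<in> age ar Ts" "isomorphic ar DB (induced Ts PB)" using finite_rep[OF wfT finPB PBsub] by blast
  have "\<exists>C\<in>age ar Ts. arrows ar C DB DA k" using ram k DA(1) DB(1) unfolding ramsey_class_def by blast
  then obtain DC where DC: "DC \<in> age ar Ts" "arrows ar DC DB DA k" by blast
  obtain eC where eC: "is_embedding ar eC DC Ts" and finDC: "finite (fst DC)" using DC(1) unfolding age_def by blast
  define PC where "PC = eC ` fst DC"
  have finPC: "finite PC" using finDC unfolding PC_def by simp
  have PCsub: "PC \<subseteq> fst Ts" using eC unfolding PC_def is_embedding_def by simp
  have arr1: "arrows ar (induced Ts PC) DB DA k" using arrows_iso[OF emb_iso_image[OF eC] DC(2)] unfolding PC_def .
  have arr2: "arrows ar (induced Ts PC) (induced Ts PB) (induced Ts PA) k"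
    by (rule arrows_iso_BA[OF DA(2) DB(2) arr1])
  define Q where "Q = copies ar (induced Ts PC) (induced Ts PA)"
  have Qchar: "\<And>q. q \<in> Q \<longleftrightarrow> q \<subseteq> PC \<and> isomorphic ar (induced Ts PA) (induced Ts q)"
    unfolding Q_def copies_induced[OF PCsub] by simp
  have finQ: "finite Q"
  proof (rule finite_subset)
    show "Q \<subseteq> Pow PC" using Qchar by blast
    show "finite (Pow PC)" using finPC by simp
  qed
  define Fk where "Fk = PiE Q (\<lambda>_. {..<k})"
  have finFk: "finite Fk" unfolding Fk_def using finQ by (simp add: finite_PiE)
  define K where "K = card Fk"
  define r where "r = card SA"
  define b where "b = card SB"
  obtain N :: nat where partn: "partn_lst {..<N} (replicate K b) r" using ramsey_full[of "replicate K b" r] by (elim exE)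
  define X where "X = {..<N::nat}"
  define W where "W = PC \<times> X"
  have Wsub: "W \<subseteq> fst Bl" unfolding W_def using PCsub Bl_fst by auto
  have finW: "finite W" unfolding W_def X_def using finPC by simp
  obtain C where C: "C \<in> age ar Bl" "isomorphic ar C (induced Bl W)" using finite_rep[OF wf_Bl finW Wsub] by blast
  have arrC0: "arrows ar (induced Bl W) B A k"
    unfolding arrows_def
  proof (intro allI impI)
    fix c :: "('a \<times> nat) set \<Rightarrow> nat"
    assume col: "\<forall>S\<in>copies ar (induced Bl W) A. c S < k"
    have cpW: "\<And>Z :: ('l, nat) str. copies ar (induced Bl W) Z = {S. S \<subseteq> W \<and> isomorphic ar Z (induced Bl S)}"
      using copies_induced[OF Wsub] by blast
    define phi where "phi q = (SOME \<phi>. is_embedding ar \<phi> (induced Ts PA) (induced Ts q) \<and> \<phi> ` PA = q)" for q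
    have phiQ: "\<And>q. q \<in> Q \<Longrightarrow> is_embedding ar (phi q) (induced Ts PA) (induced Ts q) \<and> phi q ` PA = q"
    proof -
      fix q assume "q \<in> Q"
      hence "isomorphic ar (induced Ts PA) (induced Ts q)" using Qchar by blast
      hence "\<exists>\<phi>. is_embedding ar \<phi> (induced Ts PA) (induced Ts q) \<and> \<phi> ` PA = q"
        unfolding isomorphic_def by simp
      thus "is_embedding ar (phi q) (induced Ts PA) (induced Ts q) \<and> phi q ` PA = q"
        unfolding phi_def by (rule someI_ex)
    qed
    define ee where "ee q U = embS SA (phi q) U ` SA" for q U
    have copyA: "\<And>q U. q \<in> Q \<Longrightarrow> U \<in> nsets X r \<Longrightarrow> ee q U \<in> copies ar (induced Bl W) A"
    proof -
      fix q U assume q: "q \<in> Q" and U: "U \<in> nsets X r"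
      have U': "U \<subseteq> X" "finite U" "card U = card SA" using U unfolding nsets_def r_def by auto
      have qT: "q \<subseteq> fst Ts" using q Qchar PCsub by blast
      have ph: "is_embedding ar (phi q) (induced Ts (fst ` SA)) (induced Ts q)" "phi q ` fst ` SA = q"
        using phiQ[OF q] unfolding PA_def by auto
      note P = embS_props[OF SAsub finSA ph qT U'(2) U'(3)]
      have "isomorphic ar (induced Bl SA) (induced Bl (ee q U))"
        unfolding isomorphic_def ee_def using P(1) by auto
      hence iso: "isomorphic ar A (induced Bl (ee q U))" using isoA iso_trans by blast
      have "ee q U \<subseteq> q \<times> U" unfolding ee_def using P(3) .
      moreover have "q \<times> U \<subseteq> W" unfolding W_def using q Qchar U'(1) by blast
      ultimately have "ee q U \<subseteq> W" by blast
      thus "ee q U \<in> copies ar (induced Bl W) A" using iso cpW by blast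
    qed
    define g where "g U = restrict (\<lambda>q. c (ee q U)) Q" for U
    have gF: "\<And>U. U \<in> nsets X r \<Longrightarrow> g U \<in> Fk"
    proof -
      fix U assume U: "U \<in> nsets X r"
      have "\<forall>q\<in>Q. c (ee q U) < k" using copyA[OF _ U] col by blast
      thus "g U \<in> Fk" unfolding g_def Fk_def by auto
    qed
    define col' where "col' U = to_nat_on Fk (g U)" for U
    have colK: "col' \<in> nsets X r \<rightarrow> {..<length (replicate K b)}"
    proof
      fix U assume "U \<in> nsets X r"
      hence "g U \<in> Fk" by (rule gF)
      hence "to_nat_on Fk (g U) \<in> {..<card Fk}" using to_nat_on_finite[OF finFk] unfolding bij_betw_def by blast
      thus "col' U \<in> {..<length (replicate K b)}" unfolding col'_def K_def by simp
    qed
    obtain i H where iH: "i < length (replicate K b)" "H \<in> nsets X (replicate K b ! i)" "col' ` nsets H r \<subseteq> {i}"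
      using partn_lstE[OF partn[unfolded X_def[symmetric]] colK refl] by blast
    have Hn: "H \<in> nsets X b" using iH(1,2) by simp
    have Hsub: "H \<subseteq> X" "finite H" "card H = card SB" using Hn unfolding nsets_def b_def by auto
    have HX: "nsets H r \<subseteq> nsets X r" using nsets_mono[OF Hsub(1)] .
    have homog: "\<And>U U' q. U \<in> nsets H r \<Longrightarrow> U' \<in> nsets H r \<Longrightarrow> q \<in> Q \<Longrightarrow> c (ee q U) = c (ee q U')"
    proof -
      fix U U' q assume U: "U \<in> nsets H r" and U': "U' \<in> nsets H r" and q: "q \<in> Q"
      have "col' U = i" "col' U' = i" using iH(3) U U' by auto
      hence "to_nat_on Fk (g U) = to_nat_on Fk (g U')" unfolding col'_def by simp
      moreover have "g U \<in> Fk" "g U' \<in> Fk" using gF HX U U' by auto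
      moreover have "inj_on (to_nat_on Fk) Fk" by (rule inj_on_to_nat_on[OF countable_finite[OF finFk]])
      ultimately have "g U = g U'" by (meson inj_onD)
      hence "g U q = g U' q" by simp
      thus "c (ee q U) = c (ee q U')" unfolding g_def using q by simp
    qed
    define U0 where "U0 = (SOME U. U \<in> nsets H r)"
    define c' where "c' q = (if (\<exists>U. U \<in> nsets H r) then c (ee q U0) else 0)" for q
    have c'k: "\<forall>q\<in>Q. c' q < k"
    proof
      fix q assume q: "q \<in> Q"
      show "c' q < k"
      proof (cases "\<exists>U. U \<in> nsets H r")
        case True
        hence "U0 \<in> nsets H r" unfolding U0_def by (rule someI_ex)
        hence "ee q U0 \<in> copies ar (induced Bl W) A" using copyA[OF q] HX by blast
        thus ?thesis using col True unfolding c'_def by simp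
      next
        case False thus ?thesis using k unfolding c'_def by simp
      qed
    qed
    have "\<exists>B'\<in>copies ar (induced Ts PC) (induced Ts PB). \<exists>i. \<forall>S\<in>copies ar (induced (induced Ts PC) B') (induced Ts PA). c' S = i"
      using arr2 c'k unfolding arrows_def Q_def by blast
    then obtain qB i0 where qB: "qB \<in> copies ar (induced Ts PC) (induced Ts PB)"
      and hom0: "\<forall>S\<in>copies ar (induced (induced Ts PC) qB) (induced Ts PA). c' S = i0" by blast
    have qB': "qB \<subseteq> PC" "isomorphic ar (induced Ts PB) (induced Ts qB)"
      using qB unfolding copies_induced[OF PCsub] by auto
    have qBT: "qB \<subseteq> fst Ts" using qB'(1) PCsub by blast
    obtain psiB where psiB: "is_embedding ar psiB (induced Ts PB) (induced Ts qB)" "psiB ` PB = qB"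
      using qB'(2) unfolding isomorphic_def by auto
    define B' where "B' = embS SB psiB H ` SB"
    have phB: "is_embedding ar psiB (induced Ts (fst ` SB)) (induced Ts qB)" "psiB ` fst ` SB = qB"
      using psiB unfolding PB_def by auto
    note PBp = embS_props[OF SBsub finSB phB qBT Hsub(2) Hsub(3)]
    have B'sub: "B' \<subseteq> qB \<times> H" unfolding B'_def using PBp(3) .
    have B'W: "B' \<subseteq> W" using B'sub qB'(1) Hsub(1) unfolding W_def by blast
    have B'Bl: "B' \<subseteq> fst Bl" using B'W Wsub by blast
    have "isomorphic ar (induced Bl SB) (induced Bl B')" unfolding isomorphic_def B'_def using PBp(1) by auto
    hence isoB': "isomorphic ar B (induced Bl B')" using isoB iso_trans by blast
    have B'copy: "B' \<in> copies ar (induced Bl W) B" using cpW B'W isoB' by blast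
    have ordB': "\<forall>a\<in>B'. \<forall>b\<in>B'. ltB a b \<longrightarrow> prec (snd a) (snd b)"
    proof (intro ballI impI)
      fix a b assume a: "a \<in> B'" and b: "b \<in> B'" and ab: "ltB a b"
      obtain s where s: "s \<in> SB" "a = embS SB psiB H s" using a unfolding B'_def by blast
      obtain s' where s': "s' \<in> SB" "b = embS SB psiB H s'" using b unfolding B'_def by blast
      have "ltB s s' \<longleftrightarrow> ltB (embS SB psiB H s) (embS SB psiB H s')"
        using iso_Ts_pair[OF PBp(1) arL, of s s'] s(1) s'(1) unfolding ltB_def by blast
      hence "ltB s s'" using ab s(2) s'(2) by simp
      thus "prec (snd a) (snd b)" using PBp(2) s(1) s'(1) s(2) s'(2) by blast
    qed
    show "\<exists>B'\<in>copies ar (induced Bl W) B. \<exists>i. \<forall>S\<in>copies ar (induced (induced Bl W) B') A. c S = i"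
    proof (intro bexI exI ballI)
      show "B' \<in> copies ar (induced Bl W) B" using B'copy .
      fix S' assume S'0: "S' \<in> copies ar (induced (induced Bl W) B') A"
      have e: "induced (induced Bl W) B' = induced Bl B'" by (rule induced_induced[OF B'W])
      have "S' \<in> copies ar (induced Bl B') A" using S'0 unfolding e .
      hence S': "S' \<subseteq> B'" "isomorphic ar A (induced Bl S')" unfolding copies_induced[OF B'Bl] by auto
      have "isomorphic ar (induced Bl SA) (induced Bl S')" using iso_trans[OF iso_sym[OF isoA] S'(2)] .
      then obtain psi where psi: "is_embedding ar psi (induced Bl SA) (induced Bl S')" "psi ` SA = S'"
        unfolding isomorphic_def by auto
      have S'Bl: "S' \<subseteq> fst Bl" using S'(1) B'Bl by blast
      have ordS': "\<forall>a\<in>S'. \<forall>b\<in>S'. ltB a b \<longrightarrow> prec (snd a) (snd b)" using ordB' S'(1) by blast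
      obtain \<phi>' where ph': "is_embedding ar \<phi>' (induced Ts (fst ` SA)) (induced Ts (fst ` S'))"
        "\<phi>' ` fst ` SA = fst ` S'" "S' = embS SA \<phi>' (snd ` S') ` SA" "card (snd ` S') = card SA"
        using copy_form[OF SAsub finSA S'Bl psi ordS'] by blast
      define q where "q = fst ` S'"
      define U where "U = snd ` S'"
      have qqB: "q \<subseteq> qB" using S'(1) B'sub unfolding q_def by auto
      have UH: "U \<subseteq> H" using S'(1) B'sub unfolding U_def by auto
      have isoq: "isomorphic ar (induced Ts PA) (induced Ts q)"
        using ph'(1,2) unfolding isomorphic_def PA_def q_def by auto
      have qQ: "q \<in> Q" using Qchar qqB qB'(1) isoq by blast
      have "q \<in> copies ar (induced (induced Ts PC) qB) (induced Ts PA)"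
      proof -
        have e: "induced (induced Ts PC) qB = induced Ts qB" by (rule induced_induced[OF qB'(1)])
        show ?thesis unfolding e copies_induced[OF qBT] using qqB isoq by blast
      qed
      hence cq: "c' q = i0" using hom0 by blast
      have Un: "U \<in> nsets H r" using UH ph'(4) Hsub(2) finite_subset unfolding nsets_def U_def r_def by auto
      hence ex: "\<exists>U. U \<in> nsets H r" by blast
      hence U0n: "U0 \<in> nsets H r" unfolding U0_def by (rule someI_ex)
      have qT: "q \<subseteq> fst Ts" using qqB qBT by blast
      have phq: "is_embedding ar (phi q) (induced Ts PA) (induced Ts q)" "phi q ` PA = q" using phiQ[OF qQ] by auto
      have same: "\<And>x. x \<in> PA \<Longrightarrow> phi q x = \<phi>' x"
        using iso_unique[OF PAsub finPA qT phq] ph'(1,2) unfolding PA_def q_def by blast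
      have "ee q U = S'"
      proof -
        have "ee q U = embS SA \<phi>' U ` SA"
          unfolding ee_def embS_def using same unfolding PA_def by (intro image_cong) auto
        thus ?thesis using ph'(3) unfolding U_def by simp
      qed
      hence "c S' = c (ee q U)" by simp
      also have "\<dots> = c (ee q U0)" using homog[OF Un U0n qQ] .
      also have "\<dots> = c' q" unfolding c'_def using ex by simp
      finally show "c S' = i0" using cq by simp
    qed
  qed
  show "\<exists>C\<in>age ar Bl. arrows ar C B A k"
    using C(1) arrows_iso[OF iso_sym[OF C(2)] arrC0] by blast
qed

end


theorem mainTheorem3:
  fixes ar :: "'l::countable \<Rightarrow> nat"
    and Ts :: "('l, 'a) str"
    and Esym Ltsym :: 'l
    and prec :: "nat \<Rightarrow> nat \<Rightarrow> bool"
  assumes "Esym \<noteq> Ltsym" and "ar Esym = 2" and "ar Ltsym = 2"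
    and "wf_str ar Ts"
    and "countable (fst Ts)" and "infinite (fst Ts)"
    and "tournament (fst Ts) (\<lambda>x y. [x, y] \<in> snd Ts Esym)"
    and "homogeneous_digraph (fst Ts) (\<lambda>x y. [x, y] \<in> snd Ts Esym)"
    and "strict_linear_order_on (fst Ts) (\<lambda>x y. [x, y] \<in> snd Ts Ltsym)"
    and "\<exists>h :: nat \<Rightarrow> rat. bij h \<and> (\<forall>i j. prec i j \<longleftrightarrow> h i < h j)"
    and "ramsey_class ar (age ar Ts)"
  shows "ramsey_class ar (age ar (blowup Esym Ltsym prec Ts))"
proof -
  obtain h :: "nat \<Rightarrow> rat" where hb: "bij h" and hp: "\<forall>i j. prec i j \<longleftrightarrow> h i < h j"
    using assms(10) by blast
  have hinj: "inj h" using hb by (simp add: bij_is_inj)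
  have sloP: "strict_linear_order_on UNIV prec"
    unfolding strict_linear_order_on_def
  proof (intro conjI ballI impI)
    fix x show "\<not> prec x x" using hp by simp
  next
    fix x y z assume "prec x y \<and> prec y z" thus "prec x z" using hp by auto
  next
    fix x y :: nat assume "x \<noteq> y"
    hence "h x \<noteq> h y" using hinj by (meson injD)
    thus "prec x y \<or> prec y x" using hp by auto
  qed
  interpret setting ar Ts Esym Ltsym prec
    using assms(1,2,3,4,7,9) sloP by unfold_locales
  show ?thesis by (rule main[OF assms(11)])
qed

end
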